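(* Let $G$ be a group with identity $e$, $A$ a set with at least two elements, and $\tau: A^G\to A^G$ a lazy cellular automaton with minimal neighborhood $S \subseteq G$, unique active transition $p \in A^S$ and writing symbol $a \in A \setminus \{p(e)\}$. For $b \in A$ let $S_b := p^{-1}\{b\} = \{s\in S : p(s) = b\}$. Then $\mathrm{ord}(\tau)$ is at most the minimum $n\geq 2$ (if one exists) such that for every word $(s_1, \ldots, s_{n-1})\in (S_a)^{n-1}$ there exist $1 \leq i \leq j \leq n-1$ satisfying at least one of the following: \begin{enumerate} \item $(s_j\cdots s_i)^{-1}\in S_b^{-1}S_a$ for some $b\in A\setminus\{a\}$; \item $(s_j\cdots s_i)^{-1}\in S_{b_1}^{-1}S_{b_2}$ for some $b_1, b_2\in A\setminus\{a\}$ with $b_1\neq b_2$. \end{enumerate}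
   Context: $A^G$ is the set of maps $G \to A$ with shift action $(g\cdot x)(h) := x(hg)$. A cellular automaton is a map $\tau : A^G \to A^G$ with a finite $S \subseteq G$ (a neighborhood) and $\mu : A^S \to A$ such that $\tau(x)(g) = \mu((g\cdot x)|_S)$; the minimal neighborhood is the unique neighborhood of smallest cardinality. $\tau$ is lazy with unique active transition $p \in A^S$ if there is a local defining map $\mu : A^S \to A$ with $e \in S$ such that for all $z \in A^S$: $\mu(z) = z(e)$ iff $z \neq p$; its writing symbol is $a:=\mu(p)$. $\tau^k$ is the $k$-fold composition, $\tau^0$ the identity; $\mathrm{ord}(\tau) := |\{\tau^k : k \in \mathbb{N}\}|$, $\mathbb{N}=\{0,1,\dots\}$. For $S, K \subseteq G$, $SK := \{sk : s\in S, k \in K\}$ and $S^{-1} := \{s^{-1} : s\in S\}$. *)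

theory Defs
  imports "HOL-Library.FuncSet"
begin

text \<open>The group G is a type of class group_add (not necessarily commutative),
  written additively: identity 0, product g + h, inverse - g.\<close>

definition shift :: "'g::group_add \<Rightarrow> ('g \<Rightarrow> 'a) \<Rightarrow> ('g \<Rightarrow> 'a)" where
  "shift g x = (\<lambda>h. x (h + g))"

definition is_local_rule ::
  "(('g::group_add \<Rightarrow> 'a) \<Rightarrow> ('g \<Rightarrow> 'a)) \<Rightarrow> 'g set \<Rightarrow> (('g \<Rightarrow> 'a) \<Rightarrow> 'a) \<Rightarrow> bool" where
  "is_local_rule \<tau> S \<mu> \<longleftrightarrow> finite S \<and> (\<forall>x g. \<tau> x g = \<mu> (restrict (shift g x) S))"

definition is_neighborhood ::
  "(('g::group_add \<Rightarrow> 'a) \<Rightarrow> ('g \<Rightarrow> 'a)) \<Rightarrow> 'g set \<Rightarrow> bool" where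
  "is_neighborhood \<tau> S \<longleftrightarrow> (\<exists>\<mu>. is_local_rule \<tau> S \<mu>)"

definition cellular_automaton :: "(('g::group_add \<Rightarrow> 'a) \<Rightarrow> ('g \<Rightarrow> 'a)) \<Rightarrow> bool" where
  "cellular_automaton \<tau> \<longleftrightarrow> (\<exists>S. is_neighborhood \<tau> S)"

definition minimal_neighborhood ::
  "(('g::group_add \<Rightarrow> 'a) \<Rightarrow> ('g \<Rightarrow> 'a)) \<Rightarrow> 'g set \<Rightarrow> bool" where
  "minimal_neighborhood \<tau> S \<longleftrightarrow>
     is_neighborhood \<tau> S \<and> (\<forall>S'. is_neighborhood \<tau> S' \<longrightarrow> card S \<le> card S')"

definition lazy_CA ::
  "(('g::group_add \<Rightarrow> 'a) \<Rightarrow> ('g \<Rightarrow> 'a)) \<Rightarrow> 'g set \<Rightarrow> ('g \<Rightarrow> 'a) \<Rightarrow> 'a \<Rightarrow> bool" where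
  "lazy_CA \<tau> S p a \<longleftrightarrow> p \<in> S \<rightarrow>\<^sub>E UNIV \<and>
     (\<exists>\<mu>. is_local_rule \<tau> S \<mu> \<and> 0 \<in> S \<and>
          (\<forall>z \<in> S \<rightarrow>\<^sub>E UNIV. \<mu> z = z 0 \<longleftrightarrow> z \<noteq> p) \<and> \<mu> p = a)"

definition ord_CA :: "('b \<Rightarrow> 'b) \<Rightarrow> nat" where
  "ord_CA \<tau> = card {\<tau> ^^ k | k. True}"

definition preimg :: "'g set \<Rightarrow> ('g \<Rightarrow> 'a) \<Rightarrow> 'a \<Rightarrow> 'g set" where
  "preimg S p b = {s \<in> S. p s = b}"

definition set_mult :: "'g::group_add set \<Rightarrow> 'g set \<Rightarrow> 'g set" where
  "set_mult X Y = {x + y | x y. x \<in> X \<and> y \<in> Y}"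

definition set_inv :: "'g::group_add set \<Rightarrow> 'g set" where
  "set_inv X = uminus ` X"

definition word_prod :: "(nat \<Rightarrow> 'g::group_add) \<Rightarrow> nat \<Rightarrow> nat \<Rightarrow> 'g" where
  "word_prod s i j = sum_list (map s (rev [i..<Suc j]))"

definition word_condition :: "'g::group_add set \<Rightarrow> ('g \<Rightarrow> 'a) \<Rightarrow> 'a \<Rightarrow> nat \<Rightarrow> bool" where
  "word_condition S p a n \<longleftrightarrow>
     (\<forall>s :: nat \<Rightarrow> 'g. (\<forall>k \<in> {1..n-1}. s k \<in> preimg S p a) \<longrightarrow>
        (\<exists>i j. 1 \<le> i \<and> i \<le> j \<and> j \<le> n - 1 \<and>
           ((\<exists>b. b \<noteq> a \<and>
               - word_prod s i j \<in> set_mult (set_inv (preimg S p b)) (preimg S p a)) \<or>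
            (\<exists>b1 b2. b1 \<noteq> a \<and> b2 \<noteq> a \<and> b1 \<noteq> b2 \<and>
               - word_prod s i j \<in> set_mult (set_inv (preimg S p b1)) (preimg S p b2)))))"

end

theory Submission
  imports Defs
begin

lemma step_rule:
  fixes \<tau> :: "('g::group_add \<Rightarrow> 'a) \<Rightarrow> ('g \<Rightarrow> 'a)"
  assumes lazy: "lazy_CA \<tau> S p a"
  shows "\<tau> x g = (if (\<forall>s\<in>S. x (s + g) = p s) then a else x g)"
proof -
  from lazy obtain \<mu> where p: "p \<in> S \<rightarrow>\<^sub>E UNIV" and loc: "is_local_rule \<tau> S \<mu>"
    and z0: "0 \<in> S" and mu: "\<forall>z \<in> S \<rightarrow>\<^sub>E UNIV. \<mu> z = z 0 \<longleftrightarrow> z \<noteq> p"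
    and mup: "\<mu> p = a" unfolding lazy_CA_def by blast
  define z where "z = restrict (shift g x) S"
  have tz: "\<tau> x g = \<mu> z" using loc unfolding is_local_rule_def z_def by blast
  have zP: "z \<in> S \<rightarrow>\<^sub>E UNIV" unfolding z_def by simp
  have eq: "(z = p) = (\<forall>s\<in>S. x (s + g) = p s)"
  proof
    assume "z = p" then show "\<forall>s\<in>S. x (s + g) = p s"
      unfolding z_def shift_def by (metis restrict_apply')
  next
    assume H: "\<forall>s\<in>S. x (s + g) = p s"
    show "z = p"
    proof (rule PiE_ext[OF zP p])
      fix s assume "s \<in> S" then show "z s = p s" using H unfolding z_def shift_def by simp
    qed
  qed
  show ?thesis
  proof (cases "z = p")
    case True then show ?thesis using eq tz mup by simp
  next
    case False
    then have "\<mu> z = z 0" using mu zP by blast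
    moreover have "z 0 = x g" using z0 unfolding z_def shift_def by simp
    ultimately show ?thesis using eq False tz by metis
  qed
qed

lemma word_prod_Suc:
  "i \<le> Suc j \<Longrightarrow> word_prod t i (Suc j) = t (Suc j) + word_prod t i j"
  unfolding word_prod_def by simp

lemma word_prod_same: "word_prod t i i = t i"
  unfolding word_prod_def by simp

lemma chain_prod:
  fixes t c :: "nat \<Rightarrow> 'g::group_add"
  assumes rec: "\<And>l. c (Suc l) = t (Suc l) + c l" and i: "1 \<le> i"
  shows "i \<le> j \<Longrightarrow> c j = word_prod t i j + c (i - 1)"
proof (induction j)
  case 0 then show ?case using i by simp
next
  case (Suc j)
  show ?case
  proof (cases "i = Suc j")
    case True then show ?thesis using rec[of j] word_prod_same[of t "Suc j"] by simp
  next
    case False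
    then have "i \<le> j" using Suc.prems by simp
    then have "c j = word_prod t i j + c (i - 1)" using Suc.IH by simp
    then show ?thesis using rec[of j] word_prod_Suc[of i j t] Suc.prems by (simp add: add.assoc)
  qed
qed

theorem theorem2:
  fixes \<tau> :: "('g::group_add \<Rightarrow> 'a) \<Rightarrow> ('g \<Rightarrow> 'a)"
    and S :: "'g set" and p :: "'g \<Rightarrow> 'a" and a :: 'a
  assumes two: "\<exists>x y :: 'a. x \<noteq> y"
    and ca: "cellular_automaton \<tau>"
    and minS: "minimal_neighborhood \<tau> S"
    and lazy: "lazy_CA \<tau> S p a"
    and a_ne: "a \<noteq> p 0"
    and ex: "\<exists>n. 2 \<le> n \<and> word_condition S p a n"
  shows "finite {\<tau> ^^ k | k. True} \<and>
         ord_CA \<tau> \<le> (LEAST n. 2 \<le> n \<and> word_condition S p a n)"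
proof -
  define n where "n = (LEAST n. 2 \<le> n \<and> word_condition S p a n)"
  have n2: "2 \<le> n" and wc: "word_condition S p a n"
    using LeastI_ex[OF ex] unfolding n_def by auto
  have stp: "\<And>x g. \<tau> x g = (if (\<forall>s\<in>S. x (s + g) = p s) then a else x g)"
    using step_rule[OF lazy] by blast
  have fix_eq: "\<And>x g. (\<tau> ^^ n) x g = (\<tau> ^^ (n - 1)) x g"
  proof (rule ccontr)
    fix x g assume ne: "(\<tau> ^^ n) x g \<noteq> (\<tau> ^^ (n - 1)) x g"
    define X where "X k = (\<tau> ^^ k) x" for k
    have XS: "X (Suc k) y = (if (\<forall>s\<in>S. X k (s + y) = p s) then a else X k y)" for k y
      unfolding X_def using stp by simp
    have perm1: "X m y = a \<Longrightarrow> X (m + d) y = a" for m d y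
    proof (induction d)
      case 0 then show ?case by simp
    next
      case (Suc d) then show ?case using XS[of "m + d" y] by simp
    qed
    have perm: "X m y = a \<Longrightarrow> m \<le> m' \<Longrightarrow> X m' y = a" for m m' y
      using perm1[of m y "m' - m"] by simp
    have const: "X m y \<noteq> a \<Longrightarrow> X m y = x y" for m y
    proof (induction m)
      case 0 then show ?case unfolding X_def by simp
    next
      case (Suc m) then show ?case using XS[of m y] by (simp split: if_splits)
    qed
    define ch where "ch m y \<longleftrightarrow> X (Suc m) y \<noteq> X m y" for m y
    have pat: "ch m y \<Longrightarrow> \<forall>s\<in>S. X m (s + y) = p s" for m y
      unfolding ch_def using XS[of m y] by (simp split: if_splits)
    have chain: "\<exists>t. t \<in> preimg S p a \<and> ch (m - 1) (t + y)" if "1 \<le> m" "ch m y" for m y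
    proof -
      have P: "\<forall>s\<in>S. X m (s + y) = p s" using pat that(2) by blast
      have "\<not> (\<forall>s\<in>S. X (m - 1) (s + y) = p s)"
      proof
        assume "\<forall>s\<in>S. X (m - 1) (s + y) = p s"
        then have "X m y = a" using XS[of "m - 1" y] that(1) by simp
        then have "X (Suc m) y = a" using perm[of m y "Suc m"] by simp
        then show False using that(2) \<open>X m y = a\<close> unfolding ch_def by simp
      qed
      then obtain s where s: "s \<in> S" "X (m - 1) (s + y) \<noteq> p s" by blast
      have "X m (s + y) = p s" using P s by blast
      then have c1: "ch (m - 1) (s + y)" using s that(1) unfolding ch_def by simp
      then have "X m (s + y) = a" using XS[of "m - 1" "s + y"] that(1) unfolding ch_def
        by (simp split: if_splits)
      then have "p s = a" using \<open>X m (s + y) = p s\<close> by simp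
      then show ?thesis using s c1 unfolding preimg_def by blast
    qed
    define F where "F m y = (SOME t. t \<in> preimg S p a \<and> ch (m - 1) (t + y))" for m y
    have F: "F m y \<in> preimg S p a \<and> ch (m - 1) (F m y + y)" if "1 \<le> m" "ch m y" for m y
      unfolding F_def using someI_ex[OF chain[OF that]] .
    define c where "c = rec_nat g (\<lambda>l cl. F (n - 1 - l) cl + cl)"
    define t where "t k = F (n - k) (c (k - 1))" for k
    have c0: "c 0 = g" unfolding c_def by simp
    have cS: "c (Suc l) = t (Suc l) + c l" for l unfolding c_def t_def by simp
    have chc: "l \<le> n - 1 \<Longrightarrow> ch (n - 1 - l) (c l)" for l
    proof (induction l)
      case 0
      have "Suc (n - 1) = n" using n2 by simp
      then show ?case using ne c0 unfolding ch_def X_def by simp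
    next
      case (Suc l)
      then have "ch (n - 1 - l) (c l)" by simp
      moreover have "1 \<le> n - 1 - l" using Suc.prems by simp
      ultimately have "ch (n - 1 - l - 1) (F (n - 1 - l) (c l) + c l)" using F by blast
      then show ?case unfolding c_def by simp
    qed
    have tin: "\<forall>k \<in> {1..n-1}. t k \<in> preimg S p a"
    proof
      fix k assume k: "k \<in> {1..n-1}"
      then have "k - 1 \<le> n - 1" using k diff_le_self[of k 1] by (meson atLeastAtMost_iff le_trans)
      then have "ch (n - 1 - (k - 1)) (c (k - 1))" by (rule chc)
      moreover have "n - 1 - (k - 1) = n - k" using k by auto
      ultimately show "t k \<in> preimg S p a" using F[of "n - k" "c (k - 1)"] k unfolding t_def by auto
    qed
    have W: "\<exists>i j. 1 \<le> i \<and> i \<le> j \<and> j \<le> n - 1 \<and>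
           ((\<exists>b. b \<noteq> a \<and> - word_prod t i j \<in> set_mult (set_inv (preimg S p b)) (preimg S p a)) \<or>
            (\<exists>b1 b2. b1 \<noteq> a \<and> b2 \<noteq> a \<and> b1 \<noteq> b2 \<and>
               - word_prod t i j \<in> set_mult (set_inv (preimg S p b1)) (preimg S p b2)))"
      using wc[unfolded word_condition_def, rule_format, OF bspec[OF tin]] .
    then obtain i j where ij: "1 \<le> i" "i \<le> j" "j \<le> n - 1" and
      alt: "(\<exists>b. b \<noteq> a \<and> - word_prod t i j \<in> set_mult (set_inv (preimg S p b)) (preimg S p a)) \<or>
            (\<exists>b1 b2. b1 \<noteq> a \<and> b2 \<noteq> a \<and> b1 \<noteq> b2 \<and>
               - word_prod t i j \<in> set_mult (set_inv (preimg S p b1)) (preimg S p b2))"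
      by (elim exE conjE) blast
    have cj: "c j = word_prod t i j + c (i - 1)" using chain_prod[of c t, OF cS ij(1) ij(2)] .
    then have ci: "c (i - 1) = - word_prod t i j + c j" by (simp add: add.assoc[symmetric])
    have key: False if b1: "b1 \<noteq> a" and b12: "b1 \<noteq> b2"
      and mem: "- word_prod t i j \<in> set_mult (set_inv (preimg S p b1)) (preimg S p b2)" for b1 b2
    proof -
      obtain u v where uv: "u \<in> S" "p u = b1" "v \<in> S" "p v = b2" "- word_prod t i j = - u + v"
        using mem unfolding set_mult_def set_inv_def preimg_def by blast
      define d where "d = v + c j"
      have d: "u + c (i - 1) = d" unfolding d_def using ci uv(5) by (simp add: add.assoc[symmetric])
      have "i - 1 \<le> n - 1" using ij by linarith
      then have "ch (n - 1 - (i - 1)) (c (i - 1))" by (rule chc)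
      moreover have "n - 1 - (i - 1) = n - i" using ij by simp
      ultimately have "\<forall>s\<in>S. X (n - i) (s + c (i - 1)) = p s" using pat by simp
      then have X1: "X (n - i) d = b1" using uv(1,2) d by blast
      have "ch (n - 1 - j) (c j)" using ij(3) by (rule chc)
      then have "\<forall>s\<in>S. X (n - 1 - j) (s + c j) = p s" using pat by simp
      then have X2: "X (n - 1 - j) d = b2" using uv(3,4) unfolding d_def by blast
      have le: "n - 1 - j \<le> n - i" using ij by simp
      show False
      proof (cases "b2 = a")
        case True
        then show False using perm[OF _ le] X1 X2 b1 by simp
      next
        case False
        then have "X (n - 1 - j) d = x d" using const[of "n - 1 - j" d] X2 False by simp
        moreover have "X (n - i) d = x d" using const[of "n - i" d] X1 b1 by simp
        ultimately show False using X1 X2 b12 by simp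
      qed
    qed
    from alt show False
    proof
      assume "\<exists>b. b \<noteq> a \<and> - word_prod t i j \<in> set_mult (set_inv (preimg S p b)) (preimg S p a)"
      then show False using key by blast
    next
      assume "\<exists>b1 b2. b1 \<noteq> a \<and> b2 \<noteq> a \<and> b1 \<noteq> b2 \<and>
               - word_prod t i j \<in> set_mult (set_inv (preimg S p b1)) (preimg S p b2)"
      then show False using key by blast
    qed
  qed
  have fe: "\<tau> ^^ n = \<tau> ^^ (n - 1)" using fix_eq by (intro ext) simp
  have mn: "\<tau> ^^ k = \<tau> ^^ (min k (n - 1))" for k
  proof (induction k)
    case 0 then show ?case by simp
  next
    case (Suc k)
    show ?case
    proof (cases "Suc k \<le> n - 1")
      case True then show ?thesis by simp
    next
      case False
      then have "min k (n - 1) = n - 1" by simp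
      then have "\<tau> ^^ Suc k = \<tau> \<circ> \<tau> ^^ (n - 1)" using Suc.IH by simp
      also have "\<dots> = \<tau> ^^ n"
      proof -
        have e: "Suc (n - 1) = n" using n2 by simp
        have "\<tau> ^^ Suc (n - 1) = \<tau> \<circ> \<tau> ^^ (n - 1)" by simp
        then show ?thesis using e by simp
      qed
      finally show ?thesis using fe False by simp
    qed
  qed
  have sub: "{\<tau> ^^ k | k. True} \<subseteq> (\<lambda>k. \<tau> ^^ k) ` {..<n}"
  proof
    fix f assume "f \<in> {\<tau> ^^ k | k. True}"
    then obtain k where "f = \<tau> ^^ k" by blast
    then have "f = \<tau> ^^ (min k (n - 1))" using mn by simp
    moreover have "min k (n - 1) < n" using n2 by simp
    ultimately show "f \<in> (\<lambda>k. \<tau> ^^ k) ` {..<n}" by blast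
  qed
  have fin: "finite {\<tau> ^^ k | k. True}" using sub finite_subset by blast
  have "card {\<tau> ^^ k | k. True} \<le> card ((\<lambda>k. \<tau> ^^ k) ` {..<n})"
    using sub by (intro card_mono) auto
  also have "\<dots> \<le> n" using card_image_le[of "{..<n}"] by simp
  finally show ?thesis using fin unfolding ord_CA_def n_def by simp
qed

end
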